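(* Let $T>0$ and $v(t,x)=a(x)w(t,x)$ on $\Omega_T:=[0,T)\times(0,\infty)$, where: (A1) there is $K>0$ with $|v(t,x)|\le K(1+x)$ on $\Omega_T$; (A2) $\partial_xv\in L^\infty((0,T)\times(1/R,\infty))$ for all $R>0$; (A3) $a\in\mathcal C^0([0,\infty))\cap\mathcal C^1(0,\infty)$, $a(x)>0$ for $x>0$; (A4) $w\in\mathcal C^0([0,T)\times[0,\infty))$, $\partial_xw\in\mathcal C^0((0,T)\times(0,\infty))\cap L^\infty((0,T)\times(1/R,R))$ for all $R>0$; (A5) $1/a\in L^1(0,1)$ and $\int_0^x dy/a(y)\to+\infty$ as $x\to\infty$; (A6) $\partial_xw\in L^1((0,T)\times(0,1))$; (A7) there exist $\delta>0$, $x_0>0$ with $w\ge\delta$ on $[0,T)\times(0,x_0)$. Then for each $t\in(0,T)$: (1) $x_c(t)$ is finite and positive; (2) $\sigma_t$ is a nonincreasing map which is positive on $(0,x_c(t))$; (3) $\sigma_t$ vanishes on $(x_c(t),\infty)$. Moreover, $x_c(0)=0$ and $\sigma_0$ is identically zero.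
   Context: For $(t,x)\in\Omega_T$, $s\mapsto X(s;t,x)$ denotes the unique maximal solution, with values in $(0,\infty)$ and maximal interval $\Sigma_{t,x}\subset[0,T)$, of $\partial_sX(s;t,x)=v(s,X(s;t,x))$, $X(t;t,x)=x$. Define $\sigma_t(x):=\inf\Sigma_{t,x}$ and $x_c(t):=\inf\{x>0:\sigma_t(x)=0\}$. *)

theory Defs
  imports "HOL-Analysis.Analysis"
begin

definition char_sol ::
  "(real \<Rightarrow> real \<Rightarrow> real) \<Rightarrow> real \<Rightarrow> real \<Rightarrow> real \<Rightarrow> real set \<Rightarrow> (real \<Rightarrow> real) \<Rightarrow> bool" where
  "char_sol v T t x J Y \<longleftrightarrow>
     is_interval J \<and> J \<subseteq> {0..<T} \<and> t \<in> J \<and> Y t = x \<and>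
     (\<forall>s\<in>J. Y s > 0 \<and> (Y has_real_derivative v s (Y s)) (at s within J))"

definition max_char_sol ::
  "(real \<Rightarrow> real \<Rightarrow> real) \<Rightarrow> real \<Rightarrow> real \<Rightarrow> real \<Rightarrow> real set \<Rightarrow> (real \<Rightarrow> real) \<Rightarrow> bool" where
  "max_char_sol v T t x J Y \<longleftrightarrow>
     char_sol v T t x J Y \<and>
     (\<forall>J' Y'. char_sol v T t x J' Y' \<and> J \<subseteq> J' \<and> (\<forall>s\<in>J. Y' s = Y s) \<longrightarrow> J' = J)"

definition csigma :: "(real \<Rightarrow> real \<Rightarrow> real set) \<Rightarrow> real \<Rightarrow> real \<Rightarrow> real" where
  "csigma Sig t x = Inf (Sig t x)"

definition xc :: "(real \<Rightarrow> real \<Rightarrow> real set) \<Rightarrow> real \<Rightarrow> real" where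
  "xc Sig t = Inf {x. x > 0 \<and> csigma Sig t x = 0}"

end

theory Submission
  imports Defs
begin

lemma aux1: fixes a b L :: real assumes "\<bar>b\<bar> \<le> L*\<bar>a\<bar>" shows "a*b \<ge> -L*a^2"
proof -
  have "-(a*b) \<le> \<bar>a\<bar>*\<bar>b\<bar>" by (metis abs_ge_minus_self abs_mult)
  also have "\<dots> \<le> \<bar>a\<bar>*(L*\<bar>a\<bar>)" using assms by (simp add: mult_left_mono)
  also have "\<dots> = L*a^2" by (simp add: power2_eq_square algebra_simps)
  finally show ?thesis by simp
qed

lemma ode_exist:
  fixes f :: "real \<Rightarrow> real \<Rightarrow> real"
  assumes ab: "a < b" and r: "r > 0"
    and cont: "continuous_on ({a..b} \<times> {y0-r..y0+r}) (\<lambda>p. f (fst p) (snd p))"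
    and bnd: "\<And>s y. s \<in> {a..b} \<Longrightarrow> y \<in> {y0-r..y0+r} \<Longrightarrow> \<bar>f s y\<bar> \<le> B"
    and lip: "\<And>s y z. s \<in> {a..b} \<Longrightarrow> y \<in> {y0-r..y0+r} \<Longrightarrow> z \<in> {y0-r..y0+r} \<Longrightarrow> \<bar>f s y - f s z\<bar> \<le> L * \<bar>y - z\<bar>"
    and small1: "2*(b-a)*B \<le> r" and small2: "2*(b-a)*L < 1" and L0: "L \<ge> 0"
  shows "\<exists>Z. Z b = y0 \<and> (\<forall>s\<in>{a..b}. \<bar>Z s - y0\<bar> \<le> r \<and> (Z has_real_derivative f s (Z s)) (at s within {a..b}))"
proof -
  define cT where "cT s = max a (min b s)" for s :: real
  define cY where "cY y = max (y0-r) (min (y0+r) y)" for y :: real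
  define F where "F s y = f (cT s) (cY y)" for s y
  have cTin: "cT s \<in> {a..b}" for s using ab unfolding cT_def by auto
  have cYin: "cY y \<in> {y0-r..y0+r}" for y using r unfolding cY_def by auto
  have cT_id: "s \<in> {a..b} \<Longrightarrow> cT s = s" for s unfolding cT_def by auto
  have cY_id: "y \<in> {y0-r..y0+r} \<Longrightarrow> cY y = y" for y unfolding cY_def by auto
  have cY_lip: "\<bar>cY y - cY z\<bar> \<le> \<bar>y - z\<bar>" for y z unfolding cY_def by auto
  have B0: "B \<ge> 0" using bnd[of a y0] ab r by force
  have Fb: "\<bar>F s y\<bar> \<le> B" for s y unfolding F_def using bnd cTin cYin by blast
  have Fl: "\<bar>F s y - F s z\<bar> \<le> L * \<bar>y - z\<bar>" for s y z
  proof -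
    have "\<bar>F s y - F s z\<bar> \<le> L * \<bar>cY y - cY z\<bar>" unfolding F_def using lip cTin cYin by blast
    also have "\<dots> \<le> L * \<bar>y - z\<bar>" using cY_lip L0 by (simp add: mult_left_mono)
    finally show ?thesis .
  qed
  have cTc: "continuous_on UNIV cT" unfolding cT_def by (intro continuous_intros)
  have cYc: "continuous_on UNIV cY" unfolding cY_def by (intro continuous_intros)
  have hcont: "continuous_on UNIV (\<lambda>s. F s (g s))" if gc: "continuous_on UNIV g" for g
  proof -
    have pc: "continuous_on UNIV (\<lambda>s. (cT s, cY (g s)))"
      by (intro continuous_intros continuous_on_compose2[OF cYc gc] cTc) auto
    have "continuous_on UNIV ((\<lambda>p. f (fst p) (snd p)) \<circ> (\<lambda>s. (cT s, cY (g s))))"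
      apply (rule continuous_on_compose[OF pc]) apply (rule continuous_on_subset[OF cont]) using cTin cYin by auto
    then show ?thesis unfolding F_def o_def by simp
  qed
  define H where "H g s = y0 - integral {a..b} (\<lambda>\<tau>. F \<tau> (g \<tau>)) + integral {a..cT s} (\<lambda>\<tau>. F \<tau> (g \<tau>))"
    for g :: "real \<Rightarrow> real" and s
  have intb: "\<bar>integral {a..u} (\<lambda>\<tau>. F \<tau> (g \<tau>))\<bar> \<le> B * (b - a)"
    if gc: "continuous_on UNIV g" and u: "u \<in> {a..b}" for g u
  proof -
    have "norm (integral {a..u} (\<lambda>\<tau>. F \<tau> (g \<tau>))) \<le> B * (u - a)"
      using u Fb by (intro integral_bound continuous_on_subset[OF hcont[OF gc]]) auto
    also have "\<dots> \<le> B * (b - a)" using u B0 by (simp add: mult_left_mono)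
    finally show ?thesis by simp
  qed
  have Hin: "H (apply_bcontfun g) \<in> bcontfun" for g
  proof -
    have gc: "continuous_on UNIV (apply_bcontfun g)" by simp
    have "continuous_on {a..b} (\<lambda>u. integral {a..u} (\<lambda>\<tau>. F \<tau> (apply_bcontfun g \<tau>)))"
      by (intro indefinite_integral_continuous_1 integrable_continuous_interval
            continuous_on_subset[OF hcont[OF gc]]) auto
    then have "continuous_on UNIV (\<lambda>s. integral {a..cT s} (\<lambda>\<tau>. F \<tau> (apply_bcontfun g \<tau>)))"
      by (rule continuous_on_compose2[OF _ cTc]) (use cTin in auto)
    then have c: "continuous_on UNIV (H (apply_bcontfun g))" unfolding H_def
      by (intro continuous_intros)
    show ?thesis
    proof (rule bcontfun_normI[OF c])
      fix s
      have "\<bar>H (apply_bcontfun g) s\<bar> \<le> \<bar>y0\<bar> + B*(b-a) + B*(b-a)"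
        unfolding H_def using intb[OF gc, of b] intb[OF gc, of "cT s"] cTin[of s] ab by auto
      then show "norm (H (apply_bcontfun g) s) \<le> \<bar>y0\<bar> + B*(b-a) + B*(b-a)" by simp
    qed
  qed
  define Op where "Op g = Bcontfun (H (apply_bcontfun g))" for g
  have Opapp: "apply_bcontfun (Op g) = H (apply_bcontfun g)" for g
    unfolding Op_def using Hin by (simp add: Bcontfun_inverse)
  have contr: "dist (Op g1) (Op g2) \<le> (2*(b-a)*L) * dist g1 g2" for g1 g2
  proof (rule dist_bound)
    fix s
    have gc1: "continuous_on UNIV (apply_bcontfun g1)" and gc2: "continuous_on UNIV (apply_bcontfun g2)"
      by simp_all
    have dif: "\<bar>integral {a..u} (\<lambda>\<tau>. F \<tau> (apply_bcontfun g1 \<tau>)) - integral {a..u} (\<lambda>\<tau>. F \<tau> (apply_bcontfun g2 \<tau>))\<bar>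
        \<le> L * dist g1 g2 * (b - a)" if u: "u \<in> {a..b}" for u
    proof -
      have i1: "(\<lambda>\<tau>. F \<tau> (apply_bcontfun g1 \<tau>)) integrable_on {a..u}"
        by (intro integrable_continuous_interval continuous_on_subset[OF hcont[OF gc1]]) auto
      have i2: "(\<lambda>\<tau>. F \<tau> (apply_bcontfun g2 \<tau>)) integrable_on {a..u}"
        by (intro integrable_continuous_interval continuous_on_subset[OF hcont[OF gc2]]) auto
      have "integral {a..u} (\<lambda>\<tau>. F \<tau> (apply_bcontfun g1 \<tau>)) - integral {a..u} (\<lambda>\<tau>. F \<tau> (apply_bcontfun g2 \<tau>))
          = integral {a..u} (\<lambda>\<tau>. F \<tau> (apply_bcontfun g1 \<tau>) - F \<tau> (apply_bcontfun g2 \<tau>))"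
        using i1 i2 by (simp add: integral_diff)
      also have "norm \<dots> \<le> L * dist g1 g2 * (u - a)"
      proof (rule integral_bound)
        show "a \<le> u" using u by auto
        show "continuous_on {a..u} (\<lambda>\<tau>. F \<tau> (apply_bcontfun g1 \<tau>) - F \<tau> (apply_bcontfun g2 \<tau>))"
          by (intro continuous_intros continuous_on_subset[OF hcont[OF gc1]] continuous_on_subset[OF hcont[OF gc2]]) auto
        fix \<tau>
        have "\<bar>F \<tau> (apply_bcontfun g1 \<tau>) - F \<tau> (apply_bcontfun g2 \<tau>)\<bar> \<le> L * \<bar>apply_bcontfun g1 \<tau> - apply_bcontfun g2 \<tau>\<bar>"
          by (rule Fl)
        also have "\<dots> \<le> L * dist g1 g2"
          using dist_bounded[of g1 \<tau> g2] L0 by (simp add: dist_real_def mult_left_mono)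
        finally show "norm (F \<tau> (apply_bcontfun g1 \<tau>) - F \<tau> (apply_bcontfun g2 \<tau>)) \<le> L * dist g1 g2" by simp
      qed
      also have "\<dots> \<le> L * dist g1 g2 * (b - a)" using u L0 by (intro mult_left_mono) auto
      finally show ?thesis by simp
    qed
    have "dist (apply_bcontfun (Op g1) s) (apply_bcontfun (Op g2) s)
       \<le> L * dist g1 g2 * (b - a) + L * dist g1 g2 * (b - a)"
    proof -
      have e: "\<And>x1 x2 y1 y2 c::real. \<bar>x1 - x2\<bar> \<le> c \<Longrightarrow> \<bar>y1-y2\<bar> \<le> c \<Longrightarrow> \<bar>y0 - x1 + y1 - (y0 - x2 + y2)\<bar> \<le> c + c"
        by linarith
      show ?thesis unfolding Opapp H_def dist_real_def by (rule e[OF dif[of b] dif[OF cTin[of s]]]) (use ab in auto)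
    qed
    then show "dist (apply_bcontfun (Op g1) s) (apply_bcontfun (Op g2) s) \<le> 2 * (b - a) * L * dist g1 g2"
      by (simp add: algebra_simps)
  qed
  obtain g where gfix: "Op g = g"
    using banach_fix_type[of "2*(b-a)*L" Op] contr small2 ab L0 by auto
  define Z where "Z = apply_bcontfun g"
  have gc: "continuous_on UNIV Z" unfolding Z_def by simp
  have Zeq: "Z s = H Z s" for s using gfix Opapp[of g] unfolding Z_def by metis
  define h where "h \<tau> = F \<tau> (Z \<tau>)" for \<tau>
  have hc: "continuous_on {a..b} h" unfolding h_def by (rule continuous_on_subset[OF hcont[OF gc]]) auto
  have Zs: "s \<in> {a..b} \<Longrightarrow> Z s = y0 - integral {a..b} h + integral {a..s} h" for s
    using Zeq[of s] cT_id[of s] unfolding H_def h_def by simp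
  show ?thesis
  proof (intro exI conjI ballI)
    show "Z b = y0" using Zs[of b] ab by simp
    fix s assume s: "s \<in> {a..b}"
    have "\<bar>Z s - y0\<bar> \<le> B*(b-a) + B*(b-a)"
      using Zs[OF s] intb[OF gc, of b] intb[OF gc, of s] s ab unfolding h_def by auto
    then show zb: "\<bar>Z s - y0\<bar> \<le> r" using small1 by (simp add: algebra_simps)
    have "((\<lambda>u. y0 - integral {a..b} h + integral {a..u} h) has_real_derivative h s) (at s within {a..b})"
      using integral_has_real_derivative[OF hc s] by (intro derivative_eq_intros) auto
    then have "(Z has_real_derivative h s) (at s within {a..b})"
      by (rule has_field_derivative_transform_within[of _ _ _ _ 1]) (use s Zs in auto)
    moreover have "h s = f s (Z s)" unfolding h_def F_def using cT_id[OF s] cY_id[of "Z s"] zb by (auto simp: abs_le_iff)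
    ultimately show "(Z has_real_derivative f s (Z s)) (at s within {a..b})" by simp
  qed
qed


lemma deriv_Un:
  assumes "(f has_real_derivative D) (at x within S)" "(f has_real_derivative D) (at x within T)"
  shows "(f has_real_derivative D) (at x within S \<union> T)"
  using assms unfolding has_field_derivative_def has_derivative_within by (blast intro: Lim_Un)

lemma aux2: fixes a b L :: real assumes "\<bar>b\<bar> \<le> L*\<bar>a\<bar>" shows "a*b \<le> L*a^2"
proof -
  have "a*b \<le> \<bar>a\<bar>*\<bar>b\<bar>" by (metis abs_ge_self abs_mult)
  also have "\<dots> \<le> \<bar>a\<bar>*(L*\<bar>a\<bar>)" using assms by (simp add: mult_left_mono)
  also have "\<dots> = L*a^2" by (simp add: power2_eq_square algebra_simps)
  finally show ?thesis .
qed

lemma incr_within: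
  fixes f :: "real \<Rightarrow> real"
  assumes pq: "p \<le> q" and d: "\<And>s. s \<in> {p..q} \<Longrightarrow> (f has_real_derivative f' s) (at s within {p..q})"
    and nn: "\<And>s. p < s \<Longrightarrow> s < q \<Longrightarrow> f' s \<ge> 0"
  shows "f p \<le> f q"
proof (rule DERIV_nonneg_imp_increasing_open[OF pq])
  fix s assume s: "p < s" "s < q"
  have "(f has_real_derivative f' s) (at s)" using d[of s] s at_within_Icc_at[of p s q] by auto
  then show "\<exists>y. (f has_real_derivative y) (at s) \<and> 0 \<le> y" using nn s by blast
next
  show "continuous_on {p..q} f" using d by (rule DERIV_continuous_on)
qed

lemma mvt_lower:
  fixes f :: "real \<Rightarrow> real"
  assumes pq: "p \<le> q" and d: "\<And>s. s \<in> {p..q} \<Longrightarrow> (f has_real_derivative f' s) (at s within {p..q})"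
    and nn: "\<And>s. p < s \<Longrightarrow> s < q \<Longrightarrow> f' s \<ge> c"
  shows "f q - f p \<ge> c * (q - p)"
proof -
  have "(\<lambda>u. f u - c * u) p \<le> (\<lambda>u. f u - c * u) q"
  proof (rule incr_within[OF pq])
    fix s assume "s \<in> {p..q}"
    then show "((\<lambda>u. f u - c * u) has_real_derivative (f' s - c)) (at s within {p..q})"
      using DERIV_diff[OF d DERIV_cmult[OF DERIV_ident, of c]] by simp
  next
    fix s assume "p < s" "s < q" then show "f' s - c \<ge> 0" using nn by simp
  qed
  then show ?thesis by (simp add: algebra_simps)
qed

lemma mvt_upper:
  fixes f :: "real \<Rightarrow> real"
  assumes pq: "p \<le> q" and d: "\<And>s. s \<in> {p..q} \<Longrightarrow> (f has_real_derivative f' s) (at s within {p..q})"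
    and nn: "\<And>s. p < s \<Longrightarrow> s < q \<Longrightarrow> f' s \<le> c"
  shows "f q - f p \<le> c * (q - p)"
proof -
  have "(\<lambda>u. - f u) q - (\<lambda>u. - f u) p \<ge> (-c) * (q - p)"
  proof (rule mvt_lower[OF pq, where f'="\<lambda>s. - f' s"])
    fix s assume "s \<in> {p..q}"
    then show "((\<lambda>u. - f u) has_real_derivative - f' s) (at s within {p..q})" by (rule DERIV_minus[OF d])
  next
    fix s assume "p < s" "s < q" then show "- c \<le> - f' s" using nn by simp
  qed
  then show ?thesis by simp
qed

lemma exp_bound_up: fixes a b c :: real assumes "0 < a" "0 < b" "ln a \<le> ln b + c" shows "a \<le> b * exp c"
proof -
  have "a = exp (ln a)" using assms by simp
  also have "\<dots> \<le> exp (ln b + c)" using assms(3) by simp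
  also have "\<dots> = b * exp c" using assms by (simp add: exp_add)
  finally show ?thesis .
qed

lemma exp_bound_lo: fixes a b c :: real assumes "0 < a" "0 < b" "ln b - c \<le> ln a" shows "b * exp (-c) \<le> a"
proof -
  have "b * exp (-c) = exp (ln b - c)" using assms by (simp add: exp_diff exp_minus field_simps)
  also have "\<dots> \<le> exp (ln a)" using assms(3) by simp
  also have "\<dots> = a" using assms by simp
  finally show ?thesis .
qed

lemma bd_aux: fixes y w K :: real assumes y: "y > 0" and g: "\<bar>w\<bar> \<le> K*(1+y)" shows "\<bar>inverse (1 + y) * (0 + w)\<bar> \<le> K"
proof -
  have p: "1 + y > 0" using y by simp
  have "\<bar>inverse (1 + y) * (0 + w)\<bar> = \<bar>w\<bar> / (1 + y)"
    using p by (simp add: abs_mult field_simps)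
  also have "\<dots> \<le> K" using g p by (simp add: divide_le_eq mult.commute)
  finally show ?thesis .
qed

lemma interval_sub: "is_interval (J::real set) \<Longrightarrow> s \<in> J \<Longrightarrow> t \<in> J \<Longrightarrow> {s..t} \<subseteq> J"
  unfolding is_interval_1 by (meson atLeastAtMost_iff subsetI)

lemma char_solD:
  assumes "char_sol v T t x J Y"
  shows "is_interval J" "J \<subseteq> {0..<T}" "t \<in> J" "Y t = x"
    "\<And>u. u \<in> J \<Longrightarrow> Y u > 0"
    "\<And>u. u \<in> J \<Longrightarrow> (Y has_real_derivative v u (Y u)) (at u within J)"
  using assms unfolding char_sol_def by blast+

locale chr =
  fixes v :: "real \<Rightarrow> real \<Rightarrow> real" and T K :: real
    and Sig :: "real \<Rightarrow> real \<Rightarrow> real set" and X :: "real \<Rightarrow> real \<Rightarrow> real \<Rightarrow> real"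
  assumes Tp: "T > 0" and Kp: "K > 0"
    and vcont: "continuous_on ({0<..<T} \<times> {0<..}) (\<lambda>p. v (fst p) (snd p))"
    and growth: "\<And>t x. t \<in> {0..<T} \<Longrightarrow> x > 0 \<Longrightarrow> \<bar>v t x\<bar> \<le> K*(1+x)"
    and lip: "\<And>r. r > 0 \<Longrightarrow> \<exists>L\<ge>0. \<forall>t\<in>{0<..<T}. \<forall>x\<ge>r. \<forall>y\<ge>r. \<bar>v t x - v t y\<bar> \<le> L*\<bar>x-y\<bar>"
    and Xm: "\<And>t x. t \<in> {0..<T} \<Longrightarrow> x > 0 \<Longrightarrow> max_char_sol v T t x (Sig t x) (\<lambda>s. X s t x)"
begin

lemma growth_bound:
  assumes cs: "char_sol v T t x J Y" and s: "s \<in> J" "s \<le> t"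
  shows "(1+x) * exp(-K*(t-s)) \<le> 1 + Y s \<and> 1 + Y s \<le> (1+x)*exp(K*(t-s))"
proof -
  note J = char_solD[OF cs]
  note Yp = char_solD(5)[OF cs] and Yd = char_solD(6)[OF cs]
  have sub: "{s..t} \<subseteq> J" using interval_sub[OF J(1) s(1) J(3)] .
  have dl: "((\<lambda>u. ln (1 + Y u)) has_real_derivative inverse (1 + Y u) * (0 + v u (Y u))) (at u within {s..t})"
    if u: "u \<in> {s..t}" for u
  proof -
    have uJ: "u \<in> J" using u sub by blast
    have "(Y has_real_derivative v u (Y u)) (at u within {s..t})"
      by (rule DERIV_subset[OF Yd[OF uJ] sub])
    then have d1: "((\<lambda>u. 1 + Y u) has_real_derivative 0 + v u (Y u)) (at u within {s..t})"
      by (rule DERIV_add[OF DERIV_const])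
    have "1 + Y u > 0" using Yp[OF uJ] by simp
    then show ?thesis by (rule DERIV_chain2[OF DERIV_ln d1])
  qed
  have bd: "\<bar>inverse (1 + Y u) * (0 + v u (Y u))\<bar> \<le> K" if u: "u \<in> {s..t}" for u
  proof -
    have uJ: "u \<in> J" using u sub by blast
    have yp: "Y u > 0" using Yp[OF uJ] .
    have uT: "u \<in> {0..<T}" using uJ J(2) by blast
    have g: "\<bar>v u (Y u)\<bar> \<le> K*(1+Y u)" by (rule growth[OF uT yp])
    show ?thesis using yp g by (rule bd_aux)
  qed
  have i1: "ln (1 + Y t) - ln (1 + Y s) \<le> K * (t - s)"
  proof (rule mvt_upper[of s t "\<lambda>u. ln (1 + Y u)" "\<lambda>u. inverse (1 + Y u) * (0 + v u (Y u))" K, OF s(2) dl])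
    fix u assume "s < u" "u < t" then have "u \<in> {s..t}" by auto
    from bd[OF this] show "inverse (1 + Y u) * (0 + v u (Y u)) \<le> K" by (simp only: abs_le_iff)
  qed
  have i2: "ln (1 + Y t) - ln (1 + Y s) \<ge> (-K) * (t - s)"
  proof (rule mvt_lower[of s t "\<lambda>u. ln (1 + Y u)" "\<lambda>u. inverse (1 + Y u) * (0 + v u (Y u))" "-K", OF s(2) dl])
    fix u assume "s < u" "u < t" then have "u \<in> {s..t}" by auto
    from abs_le_D2[OF bd[OF this]] show "inverse (1 + Y u) * (0 + v u (Y u)) \<ge> -K" by (simp only: minus_le_iff)
  qed
  have ps: "1 + Y s > 0" using Yp[OF s(1)] by auto
  have px: "1 + x > 0" using Yp[OF J(3)] J(4) by auto
  have Yt: "ln (1 + Y t) = ln (1 + x)" using J(4) by simp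
  have l1: "ln (1 + Y s) \<le> ln (1+x) + K*(t-s)" using i2 Yt by linarith
  have u1: "1 + Y s \<le> (1+x)*exp(K*(t-s))" using ps px l1 by (rule exp_bound_up)
  have l2: "ln (1+x) - K*(t-s) \<le> ln (1 + Y s)" using i1 Yt by linarith
  have u2: "(1+x)*exp(-K*(t-s)) \<le> 1 + Y s"
    using exp_bound_lo[of "1 + Y s" "1+x" "K*(t-s)"] ps px l2 by simp
  show ?thesis using u1 u2 by blast
qed


lemma uniq:
  assumes pq: "0 \<le> p" "p \<le> q" "q < T"
    and pos1: "\<And>s. s \<in> {p..q} \<Longrightarrow> Y1 s > 0" and pos2: "\<And>s. s \<in> {p..q} \<Longrightarrow> Y2 s > 0"
    and d1: "\<And>s. s \<in> {p..q} \<Longrightarrow> (Y1 has_real_derivative v s (Y1 s)) (at s within {p..q})"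
    and d2: "\<And>s. s \<in> {p..q} \<Longrightarrow> (Y2 has_real_derivative v s (Y2 s)) (at s within {p..q})"
    and eq: "Y1 q = Y2 q \<or> Y1 p = Y2 p"
  shows "\<forall>s\<in>{p..q}. Y1 s = Y2 s"
proof -
  have ne: "{p..q} \<noteq> {}" using pq by simp
  have c1: "continuous_on {p..q} Y1" using d1 by (rule DERIV_continuous_on)
  have c2: "continuous_on {p..q} Y2" using d2 by (rule DERIV_continuous_on)
  obtain m1 where m1: "m1 \<in> {p..q}" "\<forall>y\<in>{p..q}. Y1 m1 \<le> Y1 y"
    using continuous_attains_inf[OF compact_Icc ne c1] by blast
  obtain m2 where m2: "m2 \<in> {p..q}" "\<forall>y\<in>{p..q}. Y2 m2 \<le> Y2 y"
    using continuous_attains_inf[OF compact_Icc ne c2] by blast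
  define r where "r = min (Y1 m1) (Y2 m2)"
  have r0: "r > 0" unfolding r_def using pos1[OF m1(1)] pos2[OF m2(1)] by simp
  have r1: "s \<in> {p..q} \<Longrightarrow> Y1 s \<ge> r" for s using m1 unfolding r_def by fastforce
  have r2: "s \<in> {p..q} \<Longrightarrow> Y2 s \<ge> r" for s using m2 unfolding r_def by fastforce
  obtain L where L0: "L \<ge> 0" and Lip: "\<forall>t\<in>{0<..<T}. \<forall>x\<ge>r. \<forall>y\<ge>r. \<bar>v t x - v t y\<bar> \<le> L*\<bar>x-y\<bar>"
    using lip[OF r0] by blast
  define D where "D s = 2*(Y1 s - Y2 s)*(v s (Y1 s) - v s (Y2 s))" for s
  have dphi: "((\<lambda>u. (Y1 u - Y2 u)^2) has_real_derivative D s) (at s within {p..q})" if s: "s \<in> {p..q}" for s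
    unfolding D_def using d1[OF s] d2[OF s] by (auto intro!: derivative_eq_intros)
  have Lb: "\<bar>v s (Y1 s) - v s (Y2 s)\<bar> \<le> L*\<bar>Y1 s - Y2 s\<bar>" if s: "p < s" "s < q" for s
  proof -
    have "s \<in> {0<..<T}" using s pq by simp
    moreover have "Y1 s \<ge> r" "Y2 s \<ge> r" using r1 r2 s by simp_all
    ultimately show ?thesis using Lip by blast
  qed
  show ?thesis
  proof (cases "Y1 q = Y2 q")
    case True
    show ?thesis
    proof
      fix u assume u: "u \<in> {p..q}"
      let ?psi = "\<lambda>s. (Y1 s - Y2 s)^2 * exp (2*L * s)"
      have "?psi u \<le> ?psi q"
      proof (rule incr_within[where p=u and q=q and f="\<lambda>s. (Y1 s - Y2 s)^2 * exp (2*L * s)" and f'="\<lambda>s. D s * exp (2*L * s) + (Y1 s - Y2 s)^2 * (exp (2*L * s) * (2*L))"])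
        show "u \<le> q" using u by simp
      next
        fix s assume s: "s \<in> {u..q}"
        then have sp: "s \<in> {p..q}" using u by simp
        have sub: "{u..q} \<subseteq> {p..q}" using u by simp
        have e: "((\<lambda>s. exp (2*L * s)) has_real_derivative exp (2*L * s) * (2*L)) (at s within {u..q})"
          by (auto intro!: derivative_eq_intros)
        show "(?psi has_real_derivative D s * exp (2*L * s) + (Y1 s - Y2 s)^2 * (exp (2*L * s) * (2*L))) (at s within {u..q})"
          by (rule DERIV_cong[OF DERIV_mult[OF DERIV_subset[OF dphi[OF sp] sub] e]]) (simp add: algebra_simps)
      next
        fix s assume s: "u < s" "s < q"
        then have s': "p < s" "s < q" using u by auto
        have De: "D s = 2 * ((Y1 s - Y2 s) * (v s (Y1 s) - v s (Y2 s)))" unfolding D_def by (simp only: mult.assoc)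
        have "D s \<ge> -(2*L)*(Y1 s - Y2 s)^2" using De aux1[OF Lb[OF s']] by linarith
        then have "D s + (Y1 s - Y2 s)^2 * (2*L) \<ge> 0" by (simp add: algebra_simps)
        then have "(D s + (Y1 s - Y2 s)^2 * (2*L)) * exp (2*L * s) \<ge> 0" by simp
        then show "D s * exp (2*L * s) + (Y1 s - Y2 s)^2 * (exp (2*L * s) * (2*L)) \<ge> 0"
          by (simp add: algebra_simps)
      qed
      then have "(Y1 u - Y2 u)^2 * exp (2*L*u) \<le> 0" using True by simp
      then have "(Y1 u - Y2 u)^2 \<le> 0" by (simp add: mult_le_0_iff)
      then show "Y1 u = Y2 u" by simp
    qed
  next
    case False
    then have True: "Y1 p = Y2 p" using eq by simp
    show ?thesis
    proof
      fix u assume u: "u \<in> {p..q}"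
      let ?chi = "\<lambda>s. - ((Y1 s - Y2 s)^2 * exp (-(2*L * s)))"
      have "?chi p \<le> ?chi u"
      proof (rule incr_within[where p=p and q=u and f="\<lambda>s. - ((Y1 s - Y2 s)^2 * exp (-(2*L * s)))" and f'="\<lambda>s. - (D s * exp (-(2*L * s)) + (Y1 s - Y2 s)^2 * (exp (-(2*L * s)) * (-(2*L))))"])
        show "p \<le> u" using u by simp
      next
        fix s assume s: "s \<in> {p..u}"
        then have sp: "s \<in> {p..q}" using u by simp
        have sub: "{p..u} \<subseteq> {p..q}" using u by simp
        have e: "((\<lambda>s. exp (-(2*L * s))) has_real_derivative exp (-(2*L * s)) * (-(2*L))) (at s within {p..u})"
          by (auto intro!: derivative_eq_intros)
        show "(?chi has_real_derivative - (D s * exp (-(2*L * s)) + (Y1 s - Y2 s)^2 * (exp (-(2*L * s)) * (-(2*L))))) (at s within {p..u})"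
          by (rule DERIV_cong[OF DERIV_minus[OF DERIV_mult[OF DERIV_subset[OF dphi[OF sp] sub] e]]]) (simp add: algebra_simps)
      next
        fix s assume s: "p < s" "s < u"
        then have s': "p < s" "s < q" using u by auto
        have De: "D s = 2 * ((Y1 s - Y2 s) * (v s (Y1 s) - v s (Y2 s)))" unfolding D_def by (simp only: mult.assoc)
        have "D s \<le> (2*L)*(Y1 s - Y2 s)^2" using De aux2[OF Lb[OF s']] by linarith
        then have "D s - (Y1 s - Y2 s)^2 * (2*L) \<le> 0" by (simp add: algebra_simps)
        then have "(D s - (Y1 s - Y2 s)^2 * (2*L)) * exp (-(2*L * s)) \<le> 0" by (simp add: mult_le_0_iff)
        then show "- (D s * exp (-(2*L * s)) + (Y1 s - Y2 s)^2 * (exp (-(2*L * s)) * (-(2*L)))) \<ge> 0"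
          by (simp add: algebra_simps)
      qed
      then have "(Y1 u - Y2 u)^2 * exp (-(2*L*u)) \<le> 0" using True by simp
      then have "(Y1 u - Y2 u)^2 \<le> 0" by (simp add: mult_le_0_iff)
      then show "Y1 u = Y2 u" by simp
    qed
  qed
qed


lemma extend_to_zero:
  assumes ms: "max_char_sol v T t x J Y" and m0: "m > 0"
    and bnd: "\<And>s. s \<in> J \<Longrightarrow> s \<le> t \<Longrightarrow> m \<le> Y s \<and> Y s \<le> Mu"
  shows "Inf J = 0"
proof -
  have cs: "char_sol v T t x J Y" using ms unfolding max_char_sol_def by blast
  have maxl: "\<And>J' Y'. char_sol v T t x J' Y' \<Longrightarrow> J \<subseteq> J' \<Longrightarrow> (\<forall>s\<in>J. Y' s = Y s) \<Longrightarrow> J' = J"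
    using ms unfolding max_char_sol_def by blast
  note J = char_solD[OF cs]
  note Yp = char_solD(5)[OF cs] and Yd = char_solD(6)[OF cs]
  have Jne: "J \<noteq> {}" using J(3) by blast
  have J0: "\<And>s. s \<in> J \<Longrightarrow> 0 \<le> s" and JT: "\<And>s. s \<in> J \<Longrightarrow> s < T" using J(2) by auto
  have bdd: "bdd_below J" using J0 by (meson bdd_below.I)
  define \<sigma> where "\<sigma> = Inf J"
  have sig0: "\<sigma> \<ge> 0" unfolding \<sigma>_def using Jne J0 by (meson cInf_greatest)
  have sigl: "\<And>s. s \<in> J \<Longrightarrow> \<sigma> \<le> s" unfolding \<sigma>_def using bdd by (meson cInf_lower)
  show ?thesis
  proof (rule ccontr)
    assume "Inf J \<noteq> 0"
    then have sigp: "\<sigma> > 0" using sig0 unfolding \<sigma>_def by simp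
    define r where "r = m / 2"
    have r0: "r > 0" unfolding r_def using m0 by simp
    obtain L where L0: "L \<ge> 0" and Lip: "\<forall>t\<in>{0<..<T}. \<forall>x\<ge>r. \<forall>y\<ge>r. \<bar>v t x - v t y\<bar> \<le> L*\<bar>x-y\<bar>"
      using lip[OF r0] by blast
    have mMu: "m \<le> Mu" using bnd[OF J(3)] by simp
    define B where "B = K * (1 + Mu + r)"
    have B0: "B > 0" unfolding B_def using Kp mMu m0 r0 by simp
    define \<epsilon> where "\<epsilon> = min (min (r / (2*B)) (1 / (4*(L+1)))) (\<sigma>/2)"
    have ep0: "\<epsilon> > 0" unfolding \<epsilon>_def using r0 B0 L0 sigp by simp
    have ep1: "\<epsilon> \<le> r / (2*B)" and ep2: "\<epsilon> \<le> 1 / (4*(L+1))" and ep3: "\<epsilon> \<le> \<sigma>/2"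
      unfolding \<epsilon>_def by simp_all
    have "Inf J < \<sigma> + \<epsilon>" using ep0 unfolding \<sigma>_def by simp
    then obtain s0 where s0: "s0 \<in> J" "s0 < \<sigma> + \<epsilon>" using cInf_less_iff[OF Jne bdd] by blast
    define s1 where "s1 = min s0 t"
    have s1J: "s1 \<in> J" unfolding s1_def using s0(1) J(3) by (simp add: min_def)
    have s1l: "s1 < \<sigma> + \<epsilon>" "s1 \<le> t" unfolding s1_def using s0 by auto
    have s1g: "\<sigma> \<le> s1" using sigl[OF s1J] .
    define a where "a = s1 - \<epsilon>"
    have a0: "a > 0" unfolding a_def using s1g ep3 sigp by simp
    have asig: "a < \<sigma>" unfolding a_def using s1l by simp
    have as1: "a < s1" unfolding a_def using ep0 by simp
    have s1T: "s1 < T" using JT[OF s1J] .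
    define y0 where "y0 = Y s1"
    have y0b: "m \<le> y0" "y0 \<le> Mu" unfolding y0_def using bnd[OF s1J s1l(2)] by auto
    have boxpos: "\<And>y. y \<in> {y0-r..y0+r} \<Longrightarrow> y \<ge> r" using y0b unfolding r_def by auto
    have ex: "\<exists>Z. Z s1 = y0 \<and> (\<forall>s\<in>{a..s1}. \<bar>Z s - y0\<bar> \<le> r \<and> (Z has_real_derivative v s (Z s)) (at s within {a..s1}))"
    proof (rule ode_exist[where B=B and L=L])
      show "a < s1" by (rule as1)
      show "r > 0" by (rule r0)
      show "continuous_on ({a..s1} \<times> {y0-r..y0+r}) (\<lambda>p. v (fst p) (snd p))"
      proof (rule continuous_on_subset[OF vcont])
        show "{a..s1} \<times> {y0-r..y0+r} \<subseteq> {0<..<T} \<times> {0<..}"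
        proof
          fix pr assume pr: "pr \<in> {a..s1} \<times> {y0-r..y0+r}"
          then have "fst pr > 0" "fst pr < T" using a0 s1T by auto
          moreover have "snd pr > 0" using boxpos[of "snd pr"] pr r0 by auto
          ultimately show "pr \<in> {0<..<T} \<times> {0<..}" by (simp add: mem_Times_iff)
        qed
      qed
      show "\<bar>v s y\<bar> \<le> B" if "s \<in> {a..s1}" "y \<in> {y0-r..y0+r}" for s y
      proof -
        have "s \<in> {0..<T}" using that a0 s1T by auto
        moreover have "y > 0" using boxpos[OF that(2)] r0 by simp
        ultimately have "\<bar>v s y\<bar> \<le> K*(1+y)" by (rule growth)
        also have "\<dots> \<le> K*(1+Mu+r)" using that(2) y0b Kp by (intro mult_left_mono) auto
        finally show ?thesis unfolding B_def .
      qed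
      show "\<bar>v s y - v s z\<bar> \<le> L * \<bar>y - z\<bar>" if "s \<in> {a..s1}" "y \<in> {y0-r..y0+r}" "z \<in> {y0-r..y0+r}" for s y z
      proof -
        have "s \<in> {0<..<T}" using that a0 s1T by auto
        then show ?thesis using Lip boxpos[OF that(2)] boxpos[OF that(3)] by blast
      qed
      have "2 * (s1 - a) * B = 2 * \<epsilon> * B" unfolding a_def by simp
      also have "\<dots> \<le> 2 * (r / (2*B)) * B" using ep1 B0 by (intro mult_right_mono) auto
      also have "\<dots> = r" using B0 by simp
      finally show "2 * (s1 - a) * B \<le> r" .
      have "2 * (s1 - a) * L = 2 * \<epsilon> * L" unfolding a_def by simp
      also have "\<dots> \<le> 2 * (1 / (4*(L+1))) * L" using ep2 L0 by (intro mult_right_mono) auto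
      also have "\<dots> < 1" using L0 by (simp add: field_simps)
      finally show "2 * (s1 - a) * L < 1" .
      show "L \<ge> 0" by (rule L0)
    qed
    then obtain Z where Zs1: "Z s1 = y0" and Zb: "\<And>s. s \<in> {a..s1} \<Longrightarrow> \<bar>Z s - y0\<bar> \<le> r"
      and Zd: "\<And>s. s \<in> {a..s1} \<Longrightarrow> (Z has_real_derivative v s (Z s)) (at s within {a..s1})"
      by blast
    have Zp: "\<And>s. s \<in> {a..s1} \<Longrightarrow> Z s > 0"
    proof -
      fix s assume "s \<in> {a..s1}"
      then have "\<bar>Z s - y0\<bar> \<le> r" by (rule Zb)
      then have "-(Z s - y0) \<le> r" by (rule abs_le_D2)
      then show "Z s > 0" using y0b m0 unfolding r_def by linarith
    qed
    have agree: "Y s = Z s" if sJ: "s \<in> J" and ss1: "s \<le> s1" for s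
    proof -
      have sub1: "{s..s1} \<subseteq> J" by (rule interval_sub[OF J(1) sJ s1J])
      have as: "a \<le> s" using sigl[OF sJ] asig by simp
      have sub2: "{s..s1} \<subseteq> {a..s1}" using as by auto
      have "\<forall>u\<in>{s..s1}. Y u = Z u"
      proof (rule uniq)
        show "0 \<le> s" using J0[OF sJ] .
        show "s \<le> s1" by (rule ss1)
        show "s1 < T" by (rule s1T)
        show "Y u > 0" if "u \<in> {s..s1}" for u using Yp that sub1 by blast
        show "Z u > 0" if "u \<in> {s..s1}" for u using Zp that sub2 by blast
        show "(Y has_real_derivative v u (Y u)) (at u within {s..s1})" if "u \<in> {s..s1}" for u
          using DERIV_subset[OF Yd sub1] that sub1 by blast
        show "(Z has_real_derivative v u (Z u)) (at u within {s..s1})" if "u \<in> {s..s1}" for u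
          using DERIV_subset[OF Zd sub2] that sub2 by blast
        show "Y s1 = Z s1 \<or> Y s = Z s" using Zs1 unfolding y0_def by simp
      qed
      then show ?thesis using ss1 by simp
    qed
    define W where "W s = (if s \<in> J then Y s else Z s)" for s
    define J' where "J' = J \<union> {a..s1}"
    have WY: "\<And>s. s \<in> J \<Longrightarrow> W s = Y s" unfolding W_def by simp
    have WZ: "\<And>s. s \<in> {a..s1} \<Longrightarrow> W s = Z s" unfolding W_def using agree by auto
    have Jlow: "\<And>s. s \<in> J \<Longrightarrow> a < s" using sigl asig by fastforce
    have csW: "char_sol v T t x J' W"
      unfolding char_sol_def
    proof (intro conjI ballI)
      show "is_interval J'" unfolding J'_def is_interval_connected_1
        by (rule connected_Un) (use J(1) s1J as1 in \<open>auto simp: is_interval_connected_1[symmetric] is_interval_cc\<close>)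
      show "J' \<subseteq> {0..<T}" unfolding J'_def using J(2) a0 s1T by auto
      show "t \<in> J'" unfolding J'_def using J(3) by simp
      show "W t = x" using WY[OF J(3)] J(4) by simp
      fix s assume sJ': "s \<in> J'"
      show "W s > 0"
      proof (cases "s \<in> J")
        case True then show ?thesis using WY Yp by simp
      next
        case False then have "s \<in> {a..s1}" using sJ' unfolding J'_def by simp
        then show ?thesis using WZ Zp by simp
      qed
      consider (lt) "s < s1" | (eq) "s = s1" | (gt) "s > s1" by linarith
      then show "(W has_real_derivative v s (W s)) (at s within J')"
      proof cases
        case lt
        have sa: "s \<in> {a..s1}" using sJ' lt Jlow unfolding J'_def by (auto simp: less_imp_le)
        have "at s within J' = at s within {a..s1}"
        proof (rule at_within_nhd[of _ "{..<s1}"])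
          show "s \<in> {..<s1}" using lt by simp
          show "open {..<s1}" by simp
          show "J' \<inter> {..<s1} - {s} = {a..s1} \<inter> {..<s1} - {s}"
            unfolding J'_def using Jlow by (auto simp: less_imp_le)
        qed
        moreover have "(W has_real_derivative v s (W s)) (at s within {a..s1})"
          using has_field_derivative_transform_within[OF Zd[OF sa] zero_less_one sa, of W] WZ WZ[OF sa] by simp
        ultimately show ?thesis by simp
      next
        case gt
        have sJ: "s \<in> J" using sJ' gt unfolding J'_def by auto
        have "at s within J' = at s within J"
        proof (rule at_within_nhd[of _ "{s1<..}"])
          show "s \<in> {s1<..}" using gt by simp
          show "open {s1<..}" by simp
          show "J' \<inter> {s1<..} - {s} = J \<inter> {s1<..} - {s}"
            unfolding J'_def by auto
        qed
        moreover have "(W has_real_derivative v s (W s)) (at s within J)"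
          using has_field_derivative_transform_within[OF Yd[OF sJ] zero_less_one sJ, of W] WY WY[OF sJ] by simp
        ultimately show ?thesis by simp
      next
        case eq
        have sa: "s \<in> {a..s1}" using eq as1 by simp
        have sJ: "s \<in> J" using eq s1J by simp
        have "(W has_real_derivative v s (W s)) (at s within {a..s1})"
          using has_field_derivative_transform_within[OF Zd[OF sa] zero_less_one sa, of W] WZ WZ[OF sa] by simp
        moreover have "(W has_real_derivative v s (W s)) (at s within J)"
          using has_field_derivative_transform_within[OF Yd[OF sJ] zero_less_one sJ, of W] WY WY[OF sJ] by simp
        ultimately show ?thesis unfolding J'_def by (intro deriv_Un)
      qed
    qed
    have "J' = J" by (rule maxl[OF csW]) (auto simp: J'_def WY)
    moreover have "a \<in> J'" unfolding J'_def using as1 by simp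
    moreover have "a \<notin> J" using Jlow by blast
    ultimately show False by simp
  qed
qed


lemma Sig_facts:
  assumes t: "t \<in> {0..<T}" and x: "x > 0"
  shows "Sig t x \<noteq> {}" "bdd_below (Sig t x)" "\<And>s. s \<in> Sig t x \<Longrightarrow> 0 \<le> s" "t \<in> Sig t x"
    "char_sol v T t x (Sig t x) (\<lambda>s. X s t x)"
proof -
  show cs: "char_sol v T t x (Sig t x) (\<lambda>s. X s t x)" using Xm[OF t x] unfolding max_char_sol_def by blast
  show "t \<in> Sig t x" using char_solD(3)[OF cs] .
  then show "Sig t x \<noteq> {}" by blast
  show z: "\<And>s. s \<in> Sig t x \<Longrightarrow> 0 \<le> s" using char_solD(2)[OF cs] by auto
  show "bdd_below (Sig t x)" using z by (meson bdd_below.I)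
qed

lemma csig_nonneg: "t \<in> {0..<T} \<Longrightarrow> x > 0 \<Longrightarrow> 0 \<le> csigma Sig t x"
  unfolding csigma_def using Sig_facts by (meson cInf_greatest)

lemma large_zero:
  assumes t: "t \<in> {0..<T}"
  shows "csigma Sig t (2*exp(K*T)) = 0"
proof -
  define x where "x = 2*exp(K*T)"
  have x0: "x > 0" unfolding x_def by simp
  note F = Sig_facts[OF t x0]
  have "Inf (Sig t x) = 0"
  proof (rule extend_to_zero[OF Xm[OF t x0], where m=1 and Mu="(1+x)*exp(K*T)"])
    show "(0::real) < 1" by simp
    fix s assume sJ: "s \<in> Sig t x" and st: "s \<le> t"
    have gb: "(1+x) * exp(-K*(t-s)) \<le> 1 + X s t x \<and> 1 + X s t x \<le> (1+x)*exp(K*(t-s))"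
      using growth_bound[OF F(5) sJ st] by simp
    have s0: "0 \<le> s" using F(3)[OF sJ] .
    have tT: "t < T" using t by simp
    have e1: "exp(-K*T) \<le> exp(-K*(t-s))" using s0 tT Kp by simp
    have e2: "exp(K*(t-s)) \<le> exp(K*T)" using s0 tT Kp by simp
    have "2 = x * exp(-K*T)" unfolding x_def by (simp add: exp_minus field_simps)
    also have "\<dots> \<le> (1+x) * exp(-K*T)" by simp
    also have "\<dots> \<le> (1+x) * exp(-K*(t-s))" using e1 x0 by (intro mult_left_mono) auto
    finally have lo: "1 \<le> X s t x" using gb by linarith
    have "1 + X s t x \<le> (1+x)*exp(K*T)"
      using gb mult_left_mono[OF e2, of "1+x"] x0 by linarith
    then show "1 \<le> X s t x \<and> X s t x \<le> (1+x)*exp(K*T)" using lo by linarith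
  qed
  then show ?thesis unfolding csigma_def x_def .
qed

lemma csig_mono:
  assumes t: "t \<in> {0..<T}" and x0: "0 < x" and xy: "x \<le> y"
  shows "csigma Sig t y \<le> csigma Sig t x"
proof (cases "x = y")
  case True then show ?thesis by simp
next
  case False
  then have xy': "x < y" using xy by simp
  have y0: "y > 0" using x0 xy by simp
  note Fx = Sig_facts[OF t x0] and Fy = Sig_facts[OF t y0]
  define Jx where "Jx = Sig t x"
  define Jy where "Jy = Sig t y"
  note cx = char_solD[OF Fx(5), folded Jx_def] and cy = char_solD[OF Fy(5), folded Jy_def]
  have tT: "t < T" using t by simp
  have C: "X s t x < X s t y" if sx: "s \<in> Jx" and sy: "s \<in> Jy" and st: "s \<le> t" for s
  proof (rule ccontr)
    assume "\<not> X s t x < X s t y"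
    then have le: "X s t y - X s t x \<le> 0" by simp
    have subx: "{s..t} \<subseteq> Jx" by (rule interval_sub[OF cx(1) sx cx(3)])
    have suby: "{s..t} \<subseteq> Jy" by (rule interval_sub[OF cy(1) sy cy(3)])
    have dx: "\<And>u. u \<in> {s..t} \<Longrightarrow> ((\<lambda>s. X s t x) has_real_derivative v u (X u t x)) (at u within {s..t})"
      using DERIV_subset[OF cx(6) subx] subx by blast
    have dy: "\<And>u. u \<in> {s..t} \<Longrightarrow> ((\<lambda>s. X s t y) has_real_derivative v u (X u t y)) (at u within {s..t})"
      using DERIV_subset[OF cy(6) suby] suby by blast
    have cont: "continuous_on {s..t} (\<lambda>u. X u t y - X u t x)"
      using continuous_on_diff[OF DERIV_continuous_on[OF dy] DERIV_continuous_on[OF dx]] .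
    have "X t t y - X t t x \<ge> 0" using cx(4) cy(4) xy by simp
    then obtain s' where s': "s \<le> s'" "s' \<le> t" "X s' t y - X s' t x = 0"
      using IVT'[of "\<lambda>u. X u t y - X u t x" s 0 t, OF le _ st cont] by auto
    have sub': "{s'..t} \<subseteq> {s..t}" using s' by auto
    have "\<forall>u\<in>{s'..t}. X u t x = X u t y"
    proof (rule uniq)
      show "0 \<le> s'" using cx(2) sx s' by auto
      show "s' \<le> t" by (rule s'(2))
      show "t < T" by (rule tT)
      show "X u t x > 0" if "u \<in> {s'..t}" for u using cx(5) that sub' subx by blast
      show "X u t y > 0" if "u \<in> {s'..t}" for u using cy(5) that sub' suby by blast
      show "((\<lambda>s. X s t x) has_real_derivative v u (X u t x)) (at u within {s'..t})" if "u \<in> {s'..t}" for u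
        using DERIV_subset[OF dx sub'] that sub' by blast
      show "((\<lambda>s. X s t y) has_real_derivative v u (X u t y)) (at u within {s'..t})" if "u \<in> {s'..t}" for u
        using DERIV_subset[OF dy sub'] that sub' by blast
      show "X t t x = X t t y \<or> X s' t x = X s' t y" using s'(3) by simp
    qed
    then have "X t t x = X t t y" using s' by auto
    then show False using cx(4) cy(4) xy' by simp
  qed
  show ?thesis
  proof (rule ccontr)
    assume "\<not> csigma Sig t y \<le> csigma Sig t x"
    then have lt: "Inf Jx < Inf Jy" unfolding csigma_def Jx_def Jy_def by simp
    then obtain s0 where s0: "s0 \<in> Jx" "s0 < Inf Jy" using cInf_less_iff[OF Fx(1) Fx(2)] unfolding Jx_def by blast
    have s0t: "s0 \<le> t" using s0(2) cInf_lower[OF cy(3)] Fy(2) unfolding Jy_def by fastforce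
    have ne: "{s0..t} \<noteq> {}" using s0t by simp
    have subx: "{s0..t} \<subseteq> Jx" by (rule interval_sub[OF cx(1) s0(1) cx(3)])
    have contx: "continuous_on {s0..t} (\<lambda>u. X u t x)"
      using DERIV_continuous_on[OF DERIV_subset[OF cx(6) subx]] subx by blast
    obtain mu where mu: "mu \<in> {s0..t}" "\<forall>u\<in>{s0..t}. X mu t x \<le> X u t x"
      using continuous_attains_inf[OF compact_Icc ne contx] by blast
    have mpos: "X mu t x > 0" using cx(5) mu(1) subx by blast
    have "Inf Jy = 0"
    proof (rule extend_to_zero[OF Xm[OF t y0, folded Jy_def], where m="X mu t x" and Mu="(1+y)*exp(K*T)"])
      show "0 < X mu t x" by (rule mpos)
      fix s assume sJ: "s \<in> Jy" and st: "s \<le> t"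
      have "Inf Jy \<le> s" using cInf_lower[OF sJ] Fy(2) unfolding Jy_def by blast
      then have ss0: "s0 \<le> s" using s0(2) by simp
      have sJx: "s \<in> Jx" using subx ss0 st by auto
      have "X mu t x \<le> X s t x" using mu(2) ss0 st by simp
      also have "\<dots> < X s t y" by (rule C[OF sJx sJ st])
      finally have lo: "X mu t x \<le> X s t y" by simp
      have gb: "1 + X s t y \<le> (1+y)*exp(K*(t-s))"
        using growth_bound[OF Fy(5), folded Jy_def, OF sJ st] by simp
      have s00: "0 \<le> s" using cy(2) sJ by auto
      have e2: "exp(K*(t-s)) \<le> exp(K*T)" using s00 tT Kp by simp
      have "1 + X s t y \<le> (1+y)*exp(K*T)" using gb mult_left_mono[OF e2, of "1+y"] y0 by linarith
      then show "X mu t x \<le> X s t y \<and> X s t y \<le> (1+y)*exp(K*T)" using lo by linarith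
    qed
    moreover have "Inf Jx \<ge> 0" using csig_nonneg[OF t x0] unfolding csigma_def Jx_def .
    ultimately show False using lt by simp
  qed
qed


lemma small_pos:
  fixes a :: "real \<Rightarrow> real" and w :: "real \<Rightarrow> real \<Rightarrow> real"
  assumes t: "t \<in> {0<..<T}"
    and vaw: "\<And>s y. s \<in> {0..<T} \<Longrightarrow> y > 0 \<Longrightarrow> v s y = a y * w s y"
    and apos: "\<And>y. y > 0 \<Longrightarrow> a y > 0"
    and acont: "continuous_on {0<..} a"
    and aint: "(\<lambda>y. 1 / a y) integrable_on {0..1}"
    and anonneg: "\<And>y. y \<in> {0..1} \<Longrightarrow> 1 / a y \<ge> 0"
    and d0: "\<delta> > 0" and x00: "x0 > 0" "x0 \<le> 1"
    and wd: "\<And>s y. s \<in> {0..<T} \<Longrightarrow> y \<in> {0<..<x0} \<Longrightarrow> w s y \<ge> \<delta>"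
  shows "\<exists>x1>0. \<forall>x\<in>{0<..<x1}. csigma Sig t x > 0"
proof -
  define G where "G y = integral {0..y} (\<lambda>y. 1 / a y)" for y
  have Gc: "continuous_on {0..1} G" unfolding G_def by (rule indefinite_integral_continuous_1[OF aint])
  have G0: "G 0 = 0" unfolding G_def by simp
  have Gnn: "G y \<ge> 0" if y: "y \<in> {0..1}" for y
  proof -
    have "(\<lambda>y. 1 / a y) integrable_on {0..y}" using y by (intro integrable_on_subinterval[OF aint]) auto
    moreover have "\<And>z. z \<in> {0..y} \<Longrightarrow> 0 \<le> 1 / a z" using anonneg y by auto
    ultimately show ?thesis unfolding G_def by (rule integral_nonneg)
  qed
  have GD: "(G has_real_derivative 1 / a y) (at y)" if y: "0 < y" "y < 1" for y
  proof -
    have "isCont a y" using acont y continuous_on_eq_continuous_at[of "{0<..}" a] by auto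
    moreover have "a y \<noteq> 0" using apos[OF y(1)] by simp
    ultimately have "isCont (\<lambda>y. 1 / a y) y" by (auto intro!: continuous_intros)
    then have "continuous (at y within {0..1} - {}) (\<lambda>y. 1 / a y)" by (rule continuous_at_imp_continuous_within)
    then have "(G has_vector_derivative 1 / a y) (at y within {0..1} - {})"
      unfolding G_def using y by (intro integral_has_vector_derivative_continuous_at[OF aint]) auto
    then have "(G has_vector_derivative 1 / a y) (at y)" using at_within_Icc_at[of 0 y 1] y by simp
    then show ?thesis by (simp add: has_real_derivative_iff_has_vector_derivative)
  qed
  have td: "\<delta> * t > 0" using d0 t by simp
  obtain d where d: "d > 0" "\<forall>x'\<in>{0..1}. dist x' 0 < d \<longrightarrow> dist (G x') (G 0) < \<delta> * t"
    using Gc td unfolding continuous_on_iff by (metis atLeastAtMost_iff order_refl zero_le_one)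
  define x1 where "x1 = min d x0"
  have x1p: "x1 > 0" unfolding x1_def using d x00 by simp
  show ?thesis
  proof (intro exI[of _ x1] conjI ballI x1p)
    fix x assume x: "x \<in> {0<..<x1}"
    have xx0: "x < x0" "x > 0" using x unfolding x1_def by auto
    have x01: "x \<in> {0..1}" using xx0 x00 by auto
    have "x < d" using x unfolding x1_def by simp
    then have "dist (G x) (G 0) < \<delta> * t" using d(2) x01 xx0 by (simp add: dist_real_def)
    then have Gx: "G x < \<delta> * t" using G0 by (simp add: dist_real_def)
    have tt: "t \<in> {0..<T}" using t by simp
    note F = Sig_facts[OF tt xx0(2)]
    note c = char_solD[OF F(5)]
    define J where "J = Sig t x"
    have lb: "t - G x / \<delta> \<le> s" if sJ: "s \<in> J" for s
    proof (cases "t \<le> s")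
      case True
      have "G x / \<delta> \<ge> 0" using Gnn[OF x01] d0 by simp
      then show ?thesis using True by linarith
    next
      case False
      then have st: "s \<le> t" by simp
      have sub: "{s..t} \<subseteq> J" unfolding J_def by (rule interval_sub[OF c(1) sJ[unfolded J_def] c(3)])
      have Yd: "\<And>u. u \<in> {s..t} \<Longrightarrow> ((\<lambda>s. X s t x) has_real_derivative v u (X u t x)) (at u within {s..t})"
        using DERIV_subset[OF c(6) sub[unfolded J_def]] sub unfolding J_def by blast
      have Ypos: "\<And>u. u \<in> {s..t} \<Longrightarrow> X u t x > 0" using c(5) sub unfolding J_def by blast
      have uT: "\<And>u. u \<in> {s..t} \<Longrightarrow> u \<in> {0..<T}" using c(2) sub unfolding J_def by blast
      have Yc: "continuous_on {s..t} (\<lambda>s. X s t x)" using Yd by (rule DERIV_continuous_on)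
      have below: "\<forall>u\<in>{s..t}. X u t x < x0"
      proof (rule ccontr)
        assume "\<not> (\<forall>u\<in>{s..t}. X u t x < x0)"
        then obtain u0 where u0: "u0 \<in> {s..t}" "X u0 t x \<ge> x0" by (auto simp: not_less)
        define S where "S = {s..t} \<inter> (\<lambda>s. X s t x) -` {x0..}"
        have Sne: "S \<noteq> {}" using u0 unfolding S_def by auto
        have Sbdd: "bdd_above S" unfolding S_def by (meson bdd_above_Icc bdd_above_Int1)
        have Scl: "closed S" unfolding S_def by (rule continuous_closed_preimage[OF Yc]) auto
        define c0 where "c0 = Sup S"
        have c0S: "c0 \<in> S" unfolding c0_def by (rule closed_contains_Sup[OF Sne Sbdd Scl])
        have c0st: "c0 \<in> {s..t}" and Yc0: "X c0 t x \<ge> x0" using c0S unfolding S_def by auto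
        have "c0 \<noteq> t" using Yc0 c(4) xx0 by auto
        then have c0t: "c0 < t" using c0st by simp
        have after: "X u t x < x0" if "c0 < u" "u \<le> t" for u
        proof (rule ccontr)
          assume "\<not> X u t x < x0"
          then have "u \<in> S" unfolding S_def using that c0st by auto
          then have "u \<le> c0" unfolding c0_def using cSup_upper[OF _ Sbdd] by blast
          then show False using that by simp
        qed
        have subc: "{c0..t} \<subseteq> {s..t}" using c0st by auto
        have "X c0 t x \<le> X t t x"
        proof (rule incr_within[where p=c0 and q=t and f="\<lambda>s. X s t x" and f'="\<lambda>u. v u (X u t x)"])
          show "c0 \<le> t" using c0t by simp
          show "((\<lambda>s. X s t x) has_real_derivative v u (X u t x)) (at u within {c0..t})" if "u \<in> {c0..t}" for u
            using DERIV_subset[OF Yd subc] that subc by blast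
          fix u assume u: "c0 < u" "u < t"
          then have us: "u \<in> {s..t}" using c0st by auto
          have "v u (X u t x) = a (X u t x) * w u (X u t x)" using vaw[OF uT[OF us] Ypos[OF us]] .
          moreover have "a (X u t x) > 0" using apos Ypos[OF us] by simp
          moreover have "w u (X u t x) \<ge> \<delta>" using wd[OF uT[OF us]] Ypos[OF us] after[of u] u by simp
          ultimately show "v u (X u t x) \<ge> 0" using d0 by simp
        qed
        then show False using Yc0 c(4) xx0 by simp
      qed
      have Y01: "\<And>u. u \<in> {s..t} \<Longrightarrow> 0 < X u t x \<and> X u t x < 1" using below Ypos x00 by fastforce
      have gd: "((\<lambda>u. G (X u t x)) has_real_derivative (1 / a (X u t x)) * v u (X u t x)) (at u within {s..t})"
        if u: "u \<in> {s..t}" for u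
        using DERIV_chain2[OF GD Yd[OF u]] Y01[OF u] by blast
      have "G (X t t x) - G (X s t x) \<ge> \<delta> * (t - s)"
      proof (rule mvt_lower[OF st gd])
        fix u assume u: "s < u" "u < t"
        then have us: "u \<in> {s..t}" by simp
        have "v u (X u t x) = a (X u t x) * w u (X u t x)" using vaw[OF uT[OF us] Ypos[OF us]] .
        moreover have "a (X u t x) > 0" using apos Ypos[OF us] by simp
        moreover have "w u (X u t x) \<ge> \<delta>" using wd[OF uT[OF us]] Ypos[OF us] below us by simp
        ultimately show "1 / a (X u t x) * v u (X u t x) \<ge> \<delta>" by simp
      qed
      moreover have "G (X s t x) \<ge> 0" using Gnn Y01[of s] st by (simp add: less_imp_le)
      moreover have "X t t x = x" using c(4) .
      ultimately have "\<delta> * (t - s) \<le> G x" by simp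
      then show ?thesis using d0 by (simp add: field_simps)
    qed
    have "t - G x / \<delta> \<le> Inf J" using F(1) lb unfolding J_def by (meson cInf_greatest)
    moreover have "t - G x / \<delta> > 0" using Gx d0 by (simp add: field_simps)
    ultimately show "csigma Sig t x > 0" unfolding csigma_def J_def by simp
  qed
qed

end

lemma lip_from_deriv:
  fixes f :: "real \<Rightarrow> real"
  assumes d: "\<And>z. z \<ge> r \<Longrightarrow> (f has_real_derivative f' z) (at z)"
    and b: "\<And>z. z \<ge> r \<Longrightarrow> \<bar>f' z\<bar> \<le> M"
    and xy: "x \<ge> r" "y \<ge> r"
  shows "\<bar>f x - f y\<bar> \<le> M * \<bar>x - y\<bar>"
proof -
  have main: "\<bar>f q - f p\<bar> \<le> M * (q - p)" if pq: "p < q" "p \<ge> r" for p q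
  proof -
    obtain z where z: "z > p" "z < q" "f q - f p = (q - p) * f' z"
      using MVT2[OF pq(1), of f f'] d pq by force
    have "\<bar>f q - f p\<bar> = (q - p) * \<bar>f' z\<bar>" using z pq by (simp add: abs_mult)
    also have "\<dots> \<le> (q - p) * M" using b[of z] z pq by (intro mult_left_mono) auto
    finally show ?thesis by (simp add: mult.commute)
  qed
  consider "x < y" | "x = y" | "y < x" by linarith
  then show ?thesis
  proof cases
    case 1 then show ?thesis using main[of x y] xy by (simp add: abs_minus_commute)
  next
    case 2 then show ?thesis by simp
  next
    case 3 then show ?thesis using main[of y x] xy by simp
  qed
qed

theorem mainTheorem7:
  fixes T K :: real
    and v w :: "real \<Rightarrow> real \<Rightarrow> real"
    and a :: "real \<Rightarrow> real"
    and X :: "real \<Rightarrow> real \<Rightarrow> real \<Rightarrow> real"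
    and Sig :: "real \<Rightarrow> real \<Rightarrow> real set"
  assumes T_pos: "T > 0"
    and v_def: "\<forall>t\<in>{0..<T}. \<forall>x>0. v t x = a x * w t x"
    and A1: "K > 0" "\<forall>t\<in>{0..<T}. \<forall>x>0. \<bar>v t x\<bar> \<le> K * (1 + x)"
    and A2: "\<forall>R>0. \<exists>M. \<forall>t\<in>{0<..<T}. \<forall>x>1/R. \<bar>deriv (\<lambda>y. v t y) x\<bar> \<le> M"
    and A3: "continuous_on {0..} a" "\<forall>x>0. a differentiable (at x)"
            "continuous_on {0<..} (deriv a)" "\<forall>x>0. a x > 0"
    and A4: "continuous_on ({0..<T} \<times> {0..}) (\<lambda>(t, x). w t x)"
            "\<forall>t\<in>{0<..<T}. \<forall>x>0. (\<lambda>y. w t y) differentiable (at x)"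
            "continuous_on ({0<..<T} \<times> {0<..}) (\<lambda>(t, x). deriv (\<lambda>y. w t y) x)"
            "\<forall>R>0. \<exists>M. \<forall>t\<in>{0<..<T}. \<forall>x\<in>{1/R<..<R}. \<bar>deriv (\<lambda>y. w t y) x\<bar> \<le> M"
    and A5: "(\<lambda>y. 1 / a y) absolutely_integrable_on {0<..<1}"
            "filterlim (\<lambda>x. integral {0..x} (\<lambda>y. 1 / a y)) at_top at_top"
    and A6: "(\<lambda>(t, x). deriv (\<lambda>y. w t y) x) absolutely_integrable_on ({0<..<T} \<times> {0<..<1})"
    and A7: "\<exists>\<delta>>0. \<exists>x0>0. \<forall>t\<in>{0..<T}. \<forall>x\<in>{0<..<x0}. w t x \<ge> \<delta>"
    and X_max: "\<forall>t\<in>{0..<T}. \<forall>x>0. max_char_sol v T t x (Sig t x) (\<lambda>s. X s t x)"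
  shows "(\<forall>t\<in>{0<..<T}.
            {x. x > 0 \<and> csigma Sig t x = 0} \<noteq> {} \<and> xc Sig t > 0 \<and>
            (\<forall>x y. 0 < x \<and> x \<le> y \<longrightarrow> csigma Sig t y \<le> csigma Sig t x) \<and>
            (\<forall>x\<in>{0<..<xc Sig t}. csigma Sig t x > 0) \<and>
            (\<forall>x>xc Sig t. csigma Sig t x = 0))
         \<and> xc Sig 0 = 0 \<and> (\<forall>x>0. csigma Sig 0 x = 0)"
proof -
  have vD: "((\<lambda>y. v t y) has_real_derivative deriv (\<lambda>y. v t y) z) (at z)" if t: "t \<in> {0<..<T}" and z: "z > 0" for t z
  proof -
    have "a differentiable (at z)" using A3(2) z by blast
    moreover have "(\<lambda>y. w t y) differentiable (at z)" using A4(2) t z by blast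
    ultimately have "(\<lambda>y. a y * w t y) differentiable (at z)" by (rule differentiable_mult)
    then have "((\<lambda>y. a y * w t y) has_real_derivative deriv (\<lambda>y. a y * w t y) z) (at z)"
      by (simp add: DERIV_deriv_iff_real_differentiable)
    then have "((\<lambda>y. v t y) has_real_derivative deriv (\<lambda>y. a y * w t y) z) (at z)"
    proof (rule has_field_derivative_transform_within_open[of _ _ _ "{0<..}"])
      show "open {0::real<..}" by simp
      show "z \<in> {0<..}" using z by simp
      fix y :: real assume "y \<in> {0<..}"
      then show "a y * w t y = v t y" using v_def t by auto
    qed
    then have "(\<lambda>y. v t y) differentiable (at z)" unfolding real_differentiable_def by blast
    then show ?thesis by (simp add: DERIV_deriv_iff_real_differentiable)
  qed
  have lipv: "\<exists>L\<ge>0. \<forall>t\<in>{0<..<T}. \<forall>x\<ge>r. \<forall>y\<ge>r. \<bar>v t x - v t y\<bar> \<le> L*\<bar>x-y\<bar>" if r: "r > 0" for r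
  proof -
    have r2: "2/r > 0" using r by simp
    obtain M where M: "\<forall>t\<in>{0<..<T}. \<forall>x>1/(2/r). \<bar>deriv (\<lambda>y. v t y) x\<bar> \<le> M"
      using A2 r2 by blast
    have M': "\<And>t x. t \<in> {0<..<T} \<Longrightarrow> x \<ge> r \<Longrightarrow> \<bar>deriv (\<lambda>y. v t y) x\<bar> \<le> \<bar>M\<bar>"
    proof -
      fix t x assume "t \<in> {0<..<T}" "x \<ge> r"
      moreover have "1/(2/r) < x" using r \<open>x \<ge> r\<close> by simp
      ultimately have "\<bar>deriv (\<lambda>y. v t y) x\<bar> \<le> M" using M by blast
      then show "\<bar>deriv (\<lambda>y. v t y) x\<bar> \<le> \<bar>M\<bar>" by linarith
    qed
    show ?thesis
    proof (intro exI[of _ "\<bar>M\<bar>"] conjI ballI allI impI)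
      fix t x y assume t: "t \<in> {0<..<T}" and xy: "r \<le> x" "r \<le> y"
      show "\<bar>v t x - v t y\<bar> \<le> \<bar>M\<bar> * \<bar>x - y\<bar>"
      proof (rule lip_from_deriv[where r=r and f'="deriv (\<lambda>y. v t y)"])
        show "((\<lambda>y. v t y) has_real_derivative deriv (\<lambda>y. v t y) z) (at z)" if "z \<ge> r" for z
          using vD[OF t] that r by simp
        show "\<bar>deriv (\<lambda>y. v t y) z\<bar> \<le> \<bar>M\<bar>" if "z \<ge> r" for z using M'[OF t that] .
      qed (use xy in auto)
    qed simp
  qed
  have vcont: "continuous_on ({0<..<T} \<times> {0<..}) (\<lambda>p. v (fst p) (snd p))"
  proof -
    have ca: "continuous_on ({0<..<T} \<times> {0<..}) (\<lambda>p. a (snd p))"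
      by (rule continuous_on_compose2[OF A3(1) continuous_on_snd]) auto
    have "continuous_on ({0<..<T} \<times> {0<..}) (\<lambda>(t, x). w t x)"
      by (rule continuous_on_subset[OF A4(1)]) auto
    then have cw: "continuous_on ({0<..<T} \<times> {0<..}) (\<lambda>p. w (fst p) (snd p))"
      by (simp add: case_prod_beta)
    have "continuous_on ({0<..<T} \<times> {0<..}) (\<lambda>p. a (snd p) * w (fst p) (snd p))"
      by (rule continuous_on_mult[OF ca cw])
    moreover have "\<And>p. p \<in> {0<..<T} \<times> {0<..} \<Longrightarrow> v (fst p) (snd p) = a (snd p) * w (fst p) (snd p)"
      using v_def by auto
    ultimately show ?thesis using continuous_on_cong by (metis (no_types, lifting))
  qed
  interpret chr v T K Sig X
  proof
    show "T > 0" by (rule T_pos)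
    show "K > 0" by (rule A1(1))
    show "continuous_on ({0<..<T} \<times> {0<..}) (\<lambda>p. v (fst p) (snd p))" by (rule vcont)
    show "\<And>t x. t \<in> {0..<T} \<Longrightarrow> x > 0 \<Longrightarrow> \<bar>v t x\<bar> \<le> K*(1+x)" using A1(2) by blast
    show "\<And>r. r > 0 \<Longrightarrow> \<exists>L\<ge>0. \<forall>t\<in>{0<..<T}. \<forall>x\<ge>r. \<forall>y\<ge>r. \<bar>v t x - v t y\<bar> \<le> L*\<bar>x-y\<bar>"
      by (rule lipv)
    show "\<And>t x. t \<in> {0..<T} \<Longrightarrow> x > 0 \<Longrightarrow> max_char_sol v T t x (Sig t x) (\<lambda>s. X s t x)"
      using X_max by blast
  qed
  have a00: "a 0 \<ge> 0"
  proof -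
    have "(a \<longlongrightarrow> a 0) (at 0 within {0..})" using A3(1) unfolding continuous_on_def by simp
    then have "(a \<longlongrightarrow> a 0) (at_right 0)" by (rule tendsto_within_subset) auto
    moreover have "eventually (\<lambda>y. 0 \<le> a y) (at_right (0::real))"
      using eventually_at_right_less[of "0::real"] by eventually_elim (use A3(4) in \<open>auto intro: less_imp_le\<close>)
    ultimately show ?thesis using tendsto_lowerbound trivial_limit_at_right_real by blast
  qed
  have anonneg: "\<And>y. y \<in> {0..1} \<Longrightarrow> 1 / a y \<ge> 0"
  proof -
    fix y :: real assume "y \<in> {0..1}"
    then have "a y \<ge> 0" using a00 A3(4) by (cases "y = 0") (auto intro: less_imp_le)
    then show "1 / a y \<ge> 0" by simp
  qed
  have aint: "(\<lambda>y. 1 / a y) integrable_on {0..1}"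
    using A5(1) unfolding absolutely_integrable_on_def integrable_on_Icc_iff_Ioo by blast
  have acont: "continuous_on {0<..} a" by (rule continuous_on_subset[OF A3(1)]) auto
  obtain \<delta> x0 where d0: "\<delta> > 0" and x0: "x0 > 0" and wd0: "\<forall>t\<in>{0..<T}. \<forall>x\<in>{0<..<x0}. w t x \<ge> \<delta>"
    using A7 by blast
  define x0' where "x0' = min x0 1"
  have x0': "x0' > 0" "x0' \<le> 1" unfolding x0'_def using x0 by auto
  have wd: "\<And>s y. s \<in> {0..<T} \<Longrightarrow> y \<in> {0<..<x0'} \<Longrightarrow> w s y \<ge> \<delta>"
    using wd0 unfolding x0'_def by auto
  have vaw: "\<And>s y. s \<in> {0..<T} \<Longrightarrow> y > 0 \<Longrightarrow> v s y = a y * w s y" using v_def by blast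
  have apos: "\<And>y. y > 0 \<Longrightarrow> a y > 0" using A3(4) by blast
  have part1: "{x. x > 0 \<and> csigma Sig t x = 0} \<noteq> {} \<and> xc Sig t > 0 \<and>
            (\<forall>x y. 0 < x \<and> x \<le> y \<longrightarrow> csigma Sig t y \<le> csigma Sig t x) \<and>
            (\<forall>x\<in>{0<..<xc Sig t}. csigma Sig t x > 0) \<and>
            (\<forall>x>xc Sig t. csigma Sig t x = 0)" if t: "t \<in> {0<..<T}" for t
  proof -
    have t': "t \<in> {0..<T}" using t by simp
    define S where "S = {x. x > 0 \<and> csigma Sig t x = 0}"
    have xcS: "xc Sig t = Inf S" unfolding xc_def S_def ..
    have "2*exp(K*T) \<in> S" unfolding S_def using large_zero[OF t'] by simp
    then have Sne: "S \<noteq> {}" by blast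
    have Sbdd: "bdd_below S" unfolding S_def by (rule bdd_belowI[of _ 0]) auto
    obtain x1 where x1: "x1 > 0" "\<forall>x\<in>{0<..<x1}. csigma Sig t x > 0"
      using small_pos[OF t vaw apos acont aint anonneg d0 x0' wd] by blast
    have mono: "\<forall>x y. 0 < x \<and> x \<le> y \<longrightarrow> csigma Sig t y \<le> csigma Sig t x"
      using csig_mono[OF t'] by blast
    have "x1 \<le> Inf S"
    proof (rule cInf_greatest[OF Sne])
      fix y assume "y \<in> S"
      then have "y > 0" "csigma Sig t y = 0" unfolding S_def by auto
      show "x1 \<le> y"
      proof (rule ccontr)
        assume "\<not> x1 \<le> y"
        then have "y \<in> {0<..<x1}" using \<open>y > 0\<close> by simp
        then have "csigma Sig t y > 0" using x1(2) by blast
        then show False using \<open>csigma Sig t y = 0\<close> by simp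
      qed
    qed
    then have xcp: "xc Sig t > 0" using x1(1) xcS by simp
    have below: "\<forall>x\<in>{0<..<xc Sig t}. csigma Sig t x > 0"
    proof
      fix x assume x: "x \<in> {0<..<xc Sig t}"
      have "x \<notin> S"
      proof
        assume "x \<in> S"
        then have "Inf S \<le> x" using Sbdd by (rule cInf_lower)
        then show False using x xcS by simp
      qed
      then have "csigma Sig t x \<noteq> 0" using x unfolding S_def by simp
      moreover have "csigma Sig t x \<ge> 0" using csig_nonneg[OF t'] x by simp
      ultimately show "csigma Sig t x > 0" by simp
    qed
    have above: "\<forall>x>xc Sig t. csigma Sig t x = 0"
    proof (intro allI impI)
      fix x assume x: "x > xc Sig t"
      then obtain y where y: "y \<in> S" "y < x" using cInf_less_iff[OF Sne Sbdd] xcS by auto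
      then have "y > 0" "csigma Sig t y = 0" unfolding S_def by auto
      then have "csigma Sig t x \<le> 0" using mono y(2) by (metis less_imp_le)
      moreover have "csigma Sig t x \<ge> 0" using csig_nonneg[OF t'] \<open>y > 0\<close> y(2) by simp
      ultimately show "csigma Sig t x = 0" by simp
    qed
    show ?thesis using Sne[unfolded S_def] xcp mono below above by (intro conjI) assumption+
  qed
  have z0: "csigma Sig 0 x = 0" if x: "x > 0" for x
  proof -
    have t0: "(0::real) \<in> {0..<T}" using T_pos by simp
    note F = Sig_facts[OF t0 x]
    show ?thesis unfolding csigma_def by (rule cInf_eq_minimum[OF F(4) F(3)])
  qed
  have "{x. x > 0 \<and> csigma Sig 0 x = 0} = {0<..}" using z0 by auto
  then have "xc Sig 0 = 0" unfolding xc_def by simp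
  moreover have "\<forall>x>0. csigma Sig 0 x = 0" using z0 by blast
  moreover have "\<forall>t\<in>{0<..<T}. {x. x > 0 \<and> csigma Sig t x = 0} \<noteq> {} \<and> xc Sig t > 0 \<and>
            (\<forall>x y. 0 < x \<and> x \<le> y \<longrightarrow> csigma Sig t y \<le> csigma Sig t x) \<and>
            (\<forall>x\<in>{0<..<xc Sig t}. csigma Sig t x > 0) \<and>
            (\<forall>x>xc Sig t. csigma Sig t x = 0)" using part1 by blast
  ultimately show ?thesis by (intro conjI) assumption+
qed

end
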